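(* Let $H$ be normalised. Then for every integer $j\ge1$, $c^{2j}>\frac1q\mathrm{Tr}\,L^{2j}$.
   Context: Let $q\ge 2$ be an integer and let $(a_n)_{n\in\mathbb Z}$, $(b_n)_{n\in\mathbb Z}$ be real sequences with $a_n>0$, $a_{n+q}=a_n$, $b_{n+q}=b_n$ for all $n$. $H$ is the operator on $\ell^2(\mathbb Z)$ given by $(H\psi)_n=a_{n-1}\psi_{n-1}+b_n\psi_n+a_n\psi_{n+1}$. For $\lambda\in\mathbb C$ let $\phi(\lambda),\theta(\lambda)$ be the solutions of $a_{n-1}\psi_{n-1}+b_n\psi_n+a_n\psi_{n+1}=\lambda\psi_n$ ($n\in\mathbb Z$) with $\phi_0=0,\phi_1=1$ and $\theta_0=1,\theta_1=0$; the discriminant is $D(\lambda)=\phi_{q+1}(\lambda)+\theta_q(\lambda)$. The spectrum of $H$ is $\{\lambda\in\mathbb R:|D(\lambda)|\le 2\}$, with smallest point $\lambda^+_0$ and largest point $\lambda^-_q$; $c=(\lambda^-_q-\lambda^+_0)/2$. $H$ is called normalised if $\lambda^+_0=-\lambda^-_q$. The matrix $L$ is defined by $L=\begin{pmatrix} b_1 & a_1+ia_2\\ a_1-ia_2 & b_2\end{pmatrix}$ if $q=2$, and for $q\ge 3$ by $L_{jj}=b_j$, $L_{j,j+1}=L_{j+1,j}=a_j$ ($1\le j\le q-1$), $L_{1q}=ia_q$, $L_{q1}=-ia_q$, other entries $0$. *)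

theory Defs
  imports "HOL-Analysis.Analysis" "Jordan_Normal_Form.Matrix"
begin

definition jacobi_sol :: "(int \<Rightarrow> real) \<Rightarrow> (int \<Rightarrow> real) \<Rightarrow> complex \<Rightarrow> (int \<Rightarrow> complex) \<Rightarrow> bool" where
  "jacobi_sol a b lam psi \<longleftrightarrow>
     (\<forall>n. of_real (a (n - 1)) * psi (n - 1) + of_real (b n) * psi n + of_real (a n) * psi (n + 1)
          = lam * psi n)"

definition jac_phi :: "(int \<Rightarrow> real) \<Rightarrow> (int \<Rightarrow> real) \<Rightarrow> complex \<Rightarrow> int \<Rightarrow> complex" where
  "jac_phi a b lam = (THE psi. jacobi_sol a b lam psi \<and> psi 0 = 0 \<and> psi 1 = 1)"

definition jac_theta :: "(int \<Rightarrow> real) \<Rightarrow> (int \<Rightarrow> real) \<Rightarrow> complex \<Rightarrow> int \<Rightarrow> complex" where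
  "jac_theta a b lam = (THE psi. jacobi_sol a b lam psi \<and> psi 0 = 1 \<and> psi 1 = 0)"

definition discr :: "(int \<Rightarrow> real) \<Rightarrow> (int \<Rightarrow> real) \<Rightarrow> nat \<Rightarrow> complex \<Rightarrow> complex" where
  "discr a b q lam = jac_phi a b lam (int q + 1) + jac_theta a b lam (int q)"

definition jac_spectrum :: "(int \<Rightarrow> real) \<Rightarrow> (int \<Rightarrow> real) \<Rightarrow> nat \<Rightarrow> real set" where
  "jac_spectrum a b q = {lam::real. cmod (discr a b q (of_real lam)) \<le> 2}"

definition lam_min :: "(int \<Rightarrow> real) \<Rightarrow> (int \<Rightarrow> real) \<Rightarrow> nat \<Rightarrow> real" where
  "lam_min a b q = Inf (jac_spectrum a b q)"

definition lam_max :: "(int \<Rightarrow> real) \<Rightarrow> (int \<Rightarrow> real) \<Rightarrow> nat \<Rightarrow> real" where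
  "lam_max a b q = Sup (jac_spectrum a b q)"

definition jac_c :: "(int \<Rightarrow> real) \<Rightarrow> (int \<Rightarrow> real) \<Rightarrow> nat \<Rightarrow> real" where
  "jac_c a b q = (lam_max a b q - lam_min a b q) / 2"

definition normalised :: "(int \<Rightarrow> real) \<Rightarrow> (int \<Rightarrow> real) \<Rightarrow> nat \<Rightarrow> bool" where
  "normalised a b q \<longleftrightarrow> lam_min a b q = - lam_max a b q"

text \<open>The q x q matrix L (0-indexed: entry (i,k) is the paper's L_{i+1,k+1}).\<close>
definition Lmat :: "(int \<Rightarrow> real) \<Rightarrow> (int \<Rightarrow> real) \<Rightarrow> nat \<Rightarrow> complex mat" where
  "Lmat a b q =
    (if q = 2 then
       mat 2 2 (\<lambda>(i,k).
         if i = 0 \<and> k = 0 then of_real (b 1)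
         else if i = 0 \<and> k = 1 then of_real (a 1) + \<i> * of_real (a 2)
         else if i = 1 \<and> k = 0 then of_real (a 1) - \<i> * of_real (a 2)
         else of_real (b 2))
     else
       mat q q (\<lambda>(i,k).
         if i = k then of_real (b (int i + 1))
         else if k = i + 1 then of_real (a (int i + 1))
         else if i = k + 1 then of_real (a (int k + 1))
         else if i = 0 \<and> k = q - 1 then \<i> * of_real (a (int q))
         else if i = q - 1 \<and> k = 0 then - \<i> * of_real (a (int q))
         else 0))"

definition mtrace :: "complex mat \<Rightarrow> complex" where
  "mtrace A = (\<Sum>i<dim_row A. A $$ (i, i))"

end

theory Submission imports Defs "Jordan_Normal_Form.Schur_Decomposition" begin

fun fw :: "(int \<Rightarrow> real) \<Rightarrow> (int \<Rightarrow> real) \<Rightarrow> complex \<Rightarrow> complex \<Rightarrow> complex \<Rightarrow> nat \<Rightarrow> complex \<times> complex" where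
  "fw a b l x0 x1 0 = (x0, x1)"
| "fw a b l x0 x1 (Suc k) = (snd (fw a b l x0 x1 k),
     ((l - of_real (b (int k + 1))) * snd (fw a b l x0 x1 k) - of_real (a (int k)) * fst (fw a b l x0 x1 k))
       / of_real (a (int k + 1)))"

fun bw :: "(int \<Rightarrow> real) \<Rightarrow> (int \<Rightarrow> real) \<Rightarrow> complex \<Rightarrow> complex \<Rightarrow> complex \<Rightarrow> nat \<Rightarrow> complex \<times> complex" where
  "bw a b l x0 x1 0 = (x0, x1)"
| "bw a b l x0 x1 (Suc k) =
     (((l - of_real (b (- int k))) * fst (bw a b l x0 x1 k) - of_real (a (- int k)) * snd (bw a b l x0 x1 k))
       / of_real (a (- int k - 1)), fst (bw a b l x0 x1 k))"

definition ext where
  "ext a b l x0 x1 n = (if n \<ge> 0 then fst (fw a b l x0 x1 (nat n)) else fst (bw a b l x0 x1 (nat (- n))))"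

lemma ext_sol:
  assumes a0: "\<And>n. a n \<noteq> 0"
  shows "jacobi_sol a b l (ext a b l x0 x1)"
  unfolding jacobi_sol_def
proof
  fix n :: int
  consider "n \<ge> 1" | "n = 0" | "n \<le> -1" by linarith
  then show "of_real (a (n - 1)) * ext a b l x0 x1 (n - 1) + of_real (b n) * ext a b l x0 x1 n +
         of_real (a n) * ext a b l x0 x1 (n + 1) = l * ext a b l x0 x1 n"
  proof cases
    case 1
    obtain k where k: "n = int k + 1" using 1 by (intro that[of "nat (n - 1)"]) simp
    have e1: "ext a b l x0 x1 (n - 1) = fst (fw a b l x0 x1 k)" using k by (simp add: ext_def)
    have e2: "ext a b l x0 x1 n = snd (fw a b l x0 x1 k)" using k by (simp add: ext_def nat_add_distrib)
    have e3: "ext a b l x0 x1 (n+1) = ((l - of_real (b (int k + 1))) * snd (fw a b l x0 x1 k) - of_real (a (int k)) * fst (fw a b l x0 x1 k))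
       / of_real (a (int k + 1))" using k by (simp add: ext_def nat_add_distrib)
    have "a (int k + 1) \<noteq> 0" by (rule a0)
    then show ?thesis unfolding e1 e2 e3 using k by (simp add: field_simps)
  next
    case 2
    have e1: "ext a b l x0 x1 (n - 1) = ((l - of_real (b 0)) * x0 - of_real (a 0) * x1) / of_real (a (- 1))"
      using 2 by (simp add: ext_def)
    have e2: "ext a b l x0 x1 n = x0" using 2 by (simp add: ext_def)
    have e3: "ext a b l x0 x1 (n+1) = x1" using 2 by (simp add: ext_def)
    have "a (-1) \<noteq> 0" by (rule a0)
    then show ?thesis unfolding e1 e2 e3 using 2 by (simp add: field_simps)
  next
    case 3
    obtain k where k: "n = - int k - 1" using 3 by (intro that[of "nat (- n - 1)"]) simp
    have e1: "ext a b l x0 x1 (n - 1) = ((l - of_real (b (- int (Suc k)))) * fst (bw a b l x0 x1 (Suc k)) - of_real (a (- int (Suc k))) * snd (bw a b l x0 x1 (Suc k)))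
       / of_real (a (- int (Suc k) - 1))"
    proof -
      have "nat (- (n - 1)) = Suc (Suc k)" using k by simp
      then show ?thesis using k by (simp add: ext_def)
    qed
    have e2: "ext a b l x0 x1 n = fst (bw a b l x0 x1 (Suc k))"
    proof -
      have "nat (- n) = Suc k" using k by simp
      then show ?thesis using k by (simp add: ext_def)
    qed
    have e3: "ext a b l x0 x1 (n+1) = snd (bw a b l x0 x1 (Suc k))"
    proof (cases k)
      case 0 then show ?thesis using k by (simp add: ext_def)
    next
      case (Suc m)
      then have "nat (- (n+1)) = Suc m" using k by simp
      then show ?thesis using k Suc by (simp add: ext_def)
    qed
    have key: "\<And>m F S. of_real (a (m-1)) * (((l - of_real (b m)) * F - of_real (a m) * S) / of_real (a (m-1))) + of_real (b m) * F + of_real (a m) * S = l * F"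
      using a0 by (simp add: field_simps)
    have nn: "n = - int (Suc k)" using k by simp
    show ?thesis unfolding e1 e2 e3 by (simp only: nn key)
  qed
qed

lemma ext_0[simp]: "ext a b l x0 x1 0 = x0" and ext_1[simp]: "ext a b l x0 x1 1 = x1"
  by (auto simp: ext_def)

lemma ext_nat: "ext a b l x0 x1 (int k) = fst (fw a b l x0 x1 k)"
  by (simp add: ext_def)

lemma sol_unique:
  assumes a0: "\<And>n. a n \<noteq> 0"
    and s1: "jacobi_sol a b l psi" and s2: "jacobi_sol a b l chi"
    and i0: "psi 0 = chi 0" and i1: "psi 1 = chi 1"
  shows "psi = chi"
proof -
  have rec: "\<And>f n. jacobi_sol a b l f \<Longrightarrow> f (n + 1) = (l * f n - of_real (a (n - 1)) * f (n - 1) - of_real (b n) * f n) / of_real (a n)"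
    "\<And>f n. jacobi_sol a b l f \<Longrightarrow> f (n - 1) = (l * f n - of_real (a n) * f (n + 1) - of_real (b n) * f n) / of_real (a (n - 1))"
    using a0 unfolding jacobi_sol_def by (auto simp: field_simps)
  have fwd: "psi (int k) = chi (int k) \<and> psi (int k + 1) = chi (int k + 1)" for k
  proof (induction k)
    case 0 then show ?case using i0 i1 by simp
  next
    case (Suc k)
    have "psi (int k + 1 + 1) = chi (int k + 1 + 1)"
      using rec(1)[OF s1, of "int k + 1"] rec(1)[OF s2, of "int k + 1"] Suc by simp
    then show ?case using Suc by (simp add: add.commute)
  qed
  have bwd: "psi (- int k) = chi (- int k) \<and> psi (- int k + 1) = chi (- int k + 1)" for k
  proof (induction k)
    case 0 then show ?case using i0 i1 by simp
  next
    case (Suc k)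
    have "psi (- int k - 1) = chi (- int k - 1)"
      using rec(2)[OF s1, of "- int k"] rec(2)[OF s2, of "- int k"] Suc by simp
    moreover have "- int (Suc k) = - int k - 1" "- int (Suc k) + 1 = - int k" by simp_all
    ultimately show ?case using Suc by metis
  qed
  show ?thesis
  proof
    fix n :: int
    show "psi n = chi n"
    proof (cases "n \<ge> 0")
      case True then show ?thesis using fwd[of "nat n"] by simp
    next
      case False then show ?thesis using bwd[of "nat (- n)"] by simp
    qed
  qed
qed


lemma phi_eq: assumes a0: "\<And>n. a n \<noteq> 0" shows "jac_phi a b l = ext a b l 0 1"
  unfolding jac_phi_def
  by (rule the_equality) (use ext_sol[OF a0] sol_unique[OF a0] in auto)

lemma theta_eq: assumes a0: "\<And>n. a n \<noteq> 0" shows "jac_theta a b l = ext a b l 1 0"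
  unfolding jac_theta_def
  by (rule the_equality) (use ext_sol[OF a0] sol_unique[OF a0] in auto)

lemma sol_lin: assumes "jacobi_sol a b l f" "jacobi_sol a b l g"
  shows "jacobi_sol a b l (\<lambda>n. u * f n + v * g n)"
  unfolding jacobi_sol_def
proof
  fix n
  have e1: "of_real (a (n - 1)) * f (n - 1) + of_real (b n) * f n + of_real (a n) * f (n + 1) = l * f n"
   and e2: "of_real (a (n - 1)) * g (n - 1) + of_real (b n) * g n + of_real (a n) * g (n + 1) = l * g n"
    using assms unfolding jacobi_sol_def by auto
  have "of_real (a (n - 1)) * (u * f (n - 1) + v * g (n - 1)) + of_real (b n) * (u * f n + v * g n) + of_real (a n) * (u * f (n + 1) + v * g (n + 1))
    = u * (of_real (a (n - 1)) * f (n - 1) + of_real (b n) * f n + of_real (a n) * f (n + 1))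
      + v * (of_real (a (n - 1)) * g (n - 1) + of_real (b n) * g n + of_real (a n) * g (n + 1))"
    by (simp add: algebra_simps)
  also have "\<dots> = l * (u * f n + v * g n)" unfolding e1 e2 by (simp add: algebra_simps)
  finally show "of_real (a (n - 1)) * (u * f (n - 1) + v * g (n - 1)) + of_real (b n) * (u * f n + v * g n) + of_real (a n) * (u * f (n + 1) + v * g (n + 1))
    = l * (u * f n + v * g n)" .
qed

lemma sol_decomp: assumes a0: "\<And>n. a n \<noteq> 0" and s: "jacobi_sol a b l f"
  shows "f = (\<lambda>n. f 0 * jac_theta a b l n + f 1 * jac_phi a b l n)"
proof (rule sol_unique[OF a0 s])
  show "jacobi_sol a b l (\<lambda>n. f 0 * jac_theta a b l n + f 1 * jac_phi a b l n)"
    by (rule sol_lin) (auto simp: phi_eq[OF a0] theta_eq[OF a0] ext_sol[OF a0])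
qed (auto simp: phi_eq[OF a0] theta_eq[OF a0])

lemma sol_shift: assumes ap: "\<And>n. a (n + int q) = a n" and bp: "\<And>n. b (n + int q) = b n"
  and s: "jacobi_sol a b l f"
  shows "jacobi_sol a b l (\<lambda>n. f (n + int q))"
  unfolding jacobi_sol_def
proof
  fix n :: int
  have "of_real (a (n + int q - 1)) * f (n + int q - 1) + of_real (b (n + int q)) * f (n + int q) + of_real (a (n + int q)) * f (n + int q + 1) = l * f (n + int q)"
    using s unfolding jacobi_sol_def by blast
  moreover have "a (n + int q - 1) = a (n - 1)" using ap[of "n - 1"] by (simp add: algebra_simps)
  moreover have "n + int q - 1 = n - 1 + int q" "n + int q + 1 = n + 1 + int q" by simp_all
  ultimately show "of_real (a (n - 1)) * f (n - 1 + int q) + of_real (b n) * f (n + int q) + of_real (a n) * f (n + 1 + int q) = l * f (n + int q)"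
    using ap[of n] bp[of n] by simp
qed

lemma wr_alg: fixes A B C F0 F1 F2 G0 G1 G2 l :: complex
  assumes "A*F0 + B*F1 + C*F2 = l*F1" "A*G0 + B*G1 + C*G2 = l*G1"
  shows "C*(F1*G2 - F2*G1) = A*(F0*G1 - F1*G0)"
proof -
  have h1: "C*G2 = l*G1 - A*G0 - B*G1"
  proof -
    have "C*G2 = (A*G0 + B*G1 + C*G2) - A*G0 - B*G1" by simp
    then show ?thesis by (simp only: assms(2))
  qed
  have h2: "C*F2 = l*F1 - A*F0 - B*F1"
  proof -
    have "C*F2 = (A*F0 + B*F1 + C*F2) - A*F0 - B*F1" by simp
    then show ?thesis by (simp only: assms(1))
  qed
  have "C*(F1*G2 - F2*G1) = F1*(C*G2) - G1*(C*F2)" by (simp add: algebra_simps)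
  also have "\<dots> = F1*(l*G1 - A*G0 - B*G1) - G1*(l*F1 - A*F0 - B*F1)" by (simp only: h1 h2)
  also have "\<dots> = A*(F0*G1 - F1*G0)" by (simp add: algebra_simps)
  finally show ?thesis .
qed

lemma wronski: assumes s1: "jacobi_sol a b l f" and s2: "jacobi_sol a b l g"
  shows "of_real (a (int k)) * (f (int k) * g (int k + 1) - f (int k + 1) * g (int k)) = of_real (a 0) * (f 0 * g 1 - f 1 * g 0)"
proof (induction k)
  case 0 then show ?case by simp
next
  case (Suc k)
  have kk: "int k + 1 - 1 = int k" by simp
  have r1: "of_real (a (int k)) * f (int k) + of_real (b (int k + 1)) * f (int k + 1) + of_real (a (int k + 1)) * f (int k + 1 + 1) = l * f (int k + 1)"
    using s1[unfolded jacobi_sol_def, rule_format, of "int k + 1"] unfolding kk .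
  have r2: "of_real (a (int k)) * g (int k) + of_real (b (int k + 1)) * g (int k + 1) + of_real (a (int k + 1)) * g (int k + 1 + 1) = l * g (int k + 1)"
    using s2[unfolded jacobi_sol_def, rule_format, of "int k + 1"] unfolding kk .
  have "of_real (a (int k + 1)) * (f (int k + 1) * g (int k + 1 + 1) - f (int k + 1 + 1) * g (int k + 1))
      = of_real (a (int k)) * (f (int k) * g (int k + 1) - f (int k + 1) * g (int k))"
    by (rule wr_alg[OF r1 r2])
  moreover have "int (Suc k) = int k + 1" by simp
  ultimately show ?case using Suc.IH by (simp only:)
qed

lemma fw_cont: assumes a0: "\<And>n. a n \<noteq> 0"
  shows "isCont (\<lambda>l. fw a b l x0 x1 k) l0"
proof (induction k)
  case 0 then show ?case by simp
next
  case (Suc k)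
  have c1: "isCont (\<lambda>l. fst (fw a b l x0 x1 k)) l0" and c2: "isCont (\<lambda>l. snd (fw a b l x0 x1 k)) l0"
    using Suc continuous_fst continuous_snd by blast+
  have c3: "isCont (\<lambda>l. ((l - of_real (b (int k + 1))) * snd (fw a b l x0 x1 k) - of_real (a (int k)) * fst (fw a b l x0 x1 k))
       / of_real (a (int k + 1))) l0"
    by (rule continuous_divide, rule continuous_diff, rule continuous_mult, rule continuous_diff, rule continuous_ident,
        rule continuous_const, rule c2, rule continuous_mult, rule continuous_const, rule c1, rule continuous_const) (simp add: a0)
  show ?case unfolding fw.simps
    by (rule continuous_Pair[OF c2 c3])
qed

lemma fw_real: "fst (fw a b (of_real x) (of_real u) (of_real v) k) \<in> \<real> \<and> snd (fw a b (of_real x) (of_real u) (of_real v) k) \<in> \<real>"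
  by (induction k) (auto intro!: Reals_diff Reals_mult Reals_divide)

lemma discr_fw: assumes a0: "\<And>n. a n \<noteq> 0"
  shows "discr a b q l = fst (fw a b l 0 1 (Suc q)) + fst (fw a b l 1 0 q)"
proof -
  have "int q + 1 = int (Suc q)" by simp
  then show ?thesis unfolding discr_def phi_eq[OF a0] theta_eq[OF a0] by (simp only: ext_nat)
qed

lemma discr_real: assumes a0: "\<And>n. a n \<noteq> 0"
  shows "discr a b q (of_real x) \<in> \<real>"
  unfolding discr_fw[OF a0] using fw_real[of a b x 0 1 "Suc q"] fw_real[of a b x 1 0 q] by simp

lemma discr_cont: assumes a0: "\<And>n. a n \<noteq> 0"
  shows "isCont (\<lambda>x::real. discr a b q (of_real x)) y"
  unfolding discr_fw[OF a0]
proof (rule continuous_add)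
  show "isCont (\<lambda>x::real. fst (fw a b (of_real x) 0 1 (Suc q))) y"
    using isCont_o2[OF continuous_of_real[OF continuous_ident] continuous_fst[OF fw_cont[OF a0]]] .
  show "isCont (\<lambda>x::real. fst (fw a b (of_real x) 1 0 q)) y"
    using isCont_o2[OF continuous_of_real[OF continuous_ident] continuous_fst[OF fw_cont[OF a0]]] .
qed


lemma char_alg: fixes r p0 p1 X Y Z W :: complex
  assumes e1: "r*p0 = p0*X + p1*Y" and e2: "r*p1 = p0*Z + p1*W" and d: "X*W - Z*Y = 1"
    and nz: "p0 \<noteq> 0 \<or> p1 \<noteq> 0"
  shows "r^2 - (X + W)*r + 1 = 0"
proof -
  have E: "r^2 - (X + W)*r + 1 = (r - X)*(r - W) - Y*Z" using d by (simp add: algebra_simps power2_eq_square)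
  have a1: "(r - X)*p0 = Y*p1" using e1 by (simp add: algebra_simps)
  have a2: "(r - W)*p1 = Z*p0" using e2 by (simp add: algebra_simps)
  have "p0 * ((r - X)*(r - W) - Y*Z) = (r - W)*((r - X)*p0) - Y*Z*p0" by (simp add: algebra_simps)
  also have "\<dots> = (r - W)*(Y*p1) - Y*Z*p0" by (simp only: a1)
  also have "\<dots> = Y*((r - W)*p1) - Y*Z*p0" by (simp add: algebra_simps)
  also have "\<dots> = Y*(Z*p0) - Y*Z*p0" by (simp only: a2)
  also have "\<dots> = 0" by simp
  finally have z0: "p0 * ((r - X)*(r - W) - Y*Z) = 0" .
  have "p1 * ((r - X)*(r - W) - Y*Z) = (r - X)*((r - W)*p1) - Y*Z*p1" by (simp add: algebra_simps)
  also have "\<dots> = (r - X)*(Z*p0) - Y*Z*p1" by (simp only: a2)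
  also have "\<dots> = Z*((r - X)*p0) - Y*Z*p1" by (simp add: algebra_simps)
  also have "\<dots> = Z*(Y*p1) - Y*Z*p1" by (simp only: a1)
  also have "\<dots> = 0" by simp
  finally have z1: "p1 * ((r - X)*(r - W) - Y*Z) = 0" .
  from nz z0 z1 show ?thesis unfolding E by auto
qed

lemma eigvec2: fixes r X Y Z W :: complex
  assumes E: "r*r - (X + W)*r + (X*W - Z*Y) = 0"
  shows "\<exists>p0 p1. (p0 \<noteq> 0 \<or> p1 \<noteq> 0) \<and> r*p0 = p0*X + p1*Y \<and> r*p1 = p0*Z + p1*W"
proof (cases "Y = 0")
  case False
  have "r*(r - X) = Y*Z + (r - X)*W"
  proof -
    have "r*(r - X) - (Y*Z + (r - X)*W) = r*r - (X + W)*r + (X*W - Z*Y)" by (simp add: algebra_simps)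
    then show ?thesis using E by simp
  qed
  then show ?thesis using False
    by (intro exI[of _ Y] exI[of _ "r - X"]) (auto simp: algebra_simps)
next
  case Y: True
  show ?thesis
  proof (cases "Z = 0")
    case False
    have "r*(r - W) = (r - W)*X"
    proof -
      have "r*(r - W) - (r - W)*X = r*r - (X + W)*r + (X*W - Z*Y)" using Y by (simp add: algebra_simps)
      then show ?thesis using E by simp
    qed
    then show ?thesis using False Y
      by (intro exI[of _ "r - W"] exI[of _ Z]) (auto simp: algebra_simps)
  next
    case Z: True
    have "(r - X)*(r - W) = 0" using E Y Z by (simp add: algebra_simps)
    then have "r = X \<or> r = W" by auto
    then show ?thesis
    proof
      assume "r = X" then show ?thesis using Y Z by (intro exI[of _ 1] exI[of _ 0]) auto
    next
      assume "r = W" then show ?thesis using Y Z by (intro exI[of _ 0] exI[of _ 1]) auto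
    qed
  qed
qed

lemma periodic_mod: fixes f :: "int \<Rightarrow> 'a"
  assumes p: "\<And>n. f (n + int q) = f n" and q: "q > 0"
  shows "f n = f (n mod int q)"
proof -
  have k: "f (m + int k * int q) = f m" for m k
  proof (induction k)
    case 0 then show ?case by simp
  next
    case (Suc k)
    have "f (m + int (Suc k) * int q) = f ((m + int k * int q) + int q)" by (simp add: algebra_simps)
    also have "\<dots> = f (m + int k * int q)" by (rule p)
    also have "\<dots> = f m" by (rule Suc.IH)
    finally show ?case .
  qed
  have n: "n = n mod int q + (n div int q) * int q" by simp
  show ?thesis
  proof (cases "n div int q \<ge> 0")
    case True
    then obtain k where "n div int q = int k" by (metis nonneg_int_cases)
    then show ?thesis using k[of "n mod int q" k] n by simp
  next
    case False
    then obtain k where kk: "n div int q = - int k" by (metis neg_int_cases less_le not_le uminus_int_code(1) add.inverse_neutral int_nat_eq)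
    have "n mod int q = n + int k * int q" using n kk by (simp add: algebra_simps)
    then show ?thesis using k[of n k] by simp
  qed
qed

locale jac =
  fixes a b :: "int \<Rightarrow> real" and q :: nat
  assumes q2: "q \<ge> 2" and apos: "\<And>n. a n > 0"
    and aper: "\<And>n. a (n + int q) = a n" and bper: "\<And>n. b (n + int q) = b n"
begin

lemma a0: "a n \<noteq> 0" using apos[of n] by simp

lemma qpos: "q > 0" using q2 by simp

lemma th0[simp]: "jac_theta a b l 0 = 1" and th1[simp]: "jac_theta a b l 1 = 0"
  and ph0[simp]: "jac_phi a b l 0 = 0" and ph1[simp]: "jac_phi a b l 1 = 1"
  by (simp_all add: theta_eq[OF a0] phi_eq[OF a0])

lemma sol_th: "jacobi_sol a b l (jac_theta a b l)" and sol_ph: "jacobi_sol a b l (jac_phi a b l)"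
  by (simp_all add: theta_eq[OF a0] phi_eq[OF a0] ext_sol[OF a0])

lemma det1: "jac_theta a b l (int q) * jac_phi a b l (int q + 1) - jac_theta a b l (int q + 1) * jac_phi a b l (int q) = 1"
proof -
  have "of_real (a (int q)) * (jac_theta a b l (int q) * jac_phi a b l (int q + 1) - jac_theta a b l (int q + 1) * jac_phi a b l (int q))
     = of_real (a 0)" using wronski[OF sol_th sol_ph, of q] by simp
  moreover have "a (int q) = a 0" using aper[of 0] by simp
  ultimately show ?thesis using a0[of 0] by simp
qed

lemma floquet_char:
  assumes s: "jacobi_sol a b l psi" and p: "\<And>n. psi (n + int q) = r * psi n"
    and nz: "psi 0 \<noteq> 0 \<or> psi 1 \<noteq> 0"
  shows "r^2 - discr a b q l * r + 1 = 0"
proof -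
  have dec: "psi = (\<lambda>n. psi 0 * jac_theta a b l n + psi 1 * jac_phi a b l n)"
    by (rule sol_decomp[OF a0 s])
  have e1: "r * psi 0 = psi 0 * jac_theta a b l (int q) + psi 1 * jac_phi a b l (int q)"
    using p[of 0] fun_cong[OF dec, of "int q"] by simp
  have e2: "r * psi 1 = psi 0 * jac_theta a b l (int q + 1) + psi 1 * jac_phi a b l (int q + 1)"
    using p[of 1] fun_cong[OF dec, of "int q + 1"] by (simp add: add.commute)
  show ?thesis using char_alg[OF e1 e2 det1 nz] unfolding discr_def by (simp add: algebra_simps)
qed


definition "Amax = Max (a ` {0..<int q})"
definition "Bmax = Max ((\<lambda>n. \<bar>b n\<bar>) ` {0..<int q})"

lemma a_le: "a n \<le> Amax"
proof -
  have "a n = a (n mod int q)" by (rule periodic_mod[where f=a, OF aper qpos])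
  moreover have "n mod int q \<in> {0..<int q}" using qpos by simp
  ultimately show ?thesis unfolding Amax_def by (intro Max_ge) auto
qed

lemma b_le: "\<bar>b n\<bar> \<le> Bmax"
proof -
  have "b n = b (n mod int q)" by (rule periodic_mod[where f=b, OF bper qpos])
  moreover have "n mod int q \<in> {0..<int q}" using qpos by simp
  ultimately show ?thesis unfolding Bmax_def by (intro Max_ge) auto
qed

lemma spec_bound:
  assumes D2: "cmod (discr a b q (of_real x)) \<le> 2"
  shows "\<bar>x\<bar> \<le> 2 * Amax + Bmax"
proof -
  let ?l = "complex_of_real x"
  let ?X = "jac_theta a b ?l (int q)" and ?Y = "jac_phi a b ?l (int q)"
  let ?Z = "jac_theta a b ?l (int q + 1)" and ?W = "jac_phi a b ?l (int q + 1)"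
  define d where "d = Re (discr a b q ?l)"
  have Dd: "discr a b q ?l = of_real d"
    unfolding d_def using discr_real[OF a0, where b=b and q=q and x=x] by (simp add: of_real_Re)
  have d2: "\<bar>d\<bar> \<le> 2" using D2 unfolding Dd by simp
  have dsq: "d^2 \<le> 4"
  proof -
    have "\<bar>d\<bar>^2 \<le> 2^2" using d2 by (intro power_mono) auto
    then show ?thesis by simp
  qed
  define s where "s = sqrt (1 - d^2/4)"
  have s2: "s^2 = 1 - d^2/4" unfolding s_def using dsq by simp
  define r where "r = Complex (d/2) s"
  have XW: "?X + ?W = of_real d" using Dd unfolding discr_def by (simp add: add.commute)
  have rE: "r*r - (?X + ?W)*r + (?X*?W - ?Z*?Y) = 0"
    unfolding XW det1 using s2 by (simp add: r_def complex_eq_iff power2_eq_square algebra_simps)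
  have cr: "cmod r = 1" unfolding r_def cmod_def using s2 by (simp add: power_divide)
  obtain p0 p1 where nz: "p0 \<noteq> 0 \<or> p1 \<noteq> 0" and ev1: "r*p0 = p0*?X + p1*?Y" and ev2: "r*p1 = p0*?Z + p1*?W"
    using eigvec2[OF rE] by blast
  define psi where "psi = (\<lambda>n. p0 * jac_theta a b ?l n + p1 * jac_phi a b ?l n)"
  have sol: "jacobi_sol a b ?l psi" unfolding psi_def by (rule sol_lin[OF sol_th sol_ph])
  have psi0: "psi 0 = p0" and psi1: "psi 1 = p1" unfolding psi_def by simp_all
  have sh: "jacobi_sol a b ?l (\<lambda>n. psi (n + int q))" by (rule sol_shift[OF aper bper sol])
  have rs: "jacobi_sol a b ?l (\<lambda>n. r * psi n)" using sol_lin[OF sol sol, of r 0] by simp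
  have eqf: "(\<lambda>n. psi (n + int q)) = (\<lambda>n. r * psi n)"
  proof (rule sol_unique[OF a0 sh rs])
    show "psi (0 + int q) = r * psi 0" unfolding psi0 ev1 by (simp add: psi_def)
    show "psi (1 + int q) = r * psi 1" unfolding psi1 ev2 by (simp add: psi_def add.commute)
  qed
  define g where "g = (\<lambda>n. cmod (psi n))"
  have gper: "g (n + int q) = g n" for n
    using fun_cong[OF eqf, of n] cr unfolding g_def by (simp add: norm_mult)
  define M where "M = Max (g ` {0..<int q})"
  have gle: "g n \<le> M" for n
  proof -
    have "g n = g (n mod int q)" by (rule periodic_mod[where f=g, OF gper qpos])
    moreover have "n mod int q \<in> {0..<int q}" using qpos by simp
    ultimately show ?thesis unfolding M_def by (intro Max_ge) auto
  qed
  have "M \<in> g ` {0..<int q}" unfolding M_def using qpos by (intro Max_in) auto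
  then obtain n0 where gn0: "g n0 = M" by auto
  have Mpos: "M > 0"
  proof (rule ccontr)
    assume "\<not> M > 0"
    then have "g 0 \<le> 0" "g 1 \<le> 0" using gle[of 0] gle[of 1] by auto
    then have "psi 0 = 0" "psi 1 = 0" unfolding g_def by auto
    then show False using nz psi0 psi1 by simp
  qed
  have rec: "of_real (a (n0 - 1)) * psi (n0 - 1) + of_real (b n0) * psi n0 + of_real (a n0) * psi (n0 + 1) = ?l * psi n0"
    using sol unfolding jacobi_sol_def by blast
  have "\<bar>x\<bar> * M = cmod (?l * psi n0)" using gn0 unfolding g_def by (simp add: norm_mult)
  also have "\<dots> = cmod (of_real (a (n0 - 1)) * psi (n0 - 1) + of_real (b n0) * psi n0 + of_real (a n0) * psi (n0 + 1))"
    by (simp only: rec)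
  also have "\<dots> \<le> cmod (of_real (a (n0 - 1)) * psi (n0 - 1)) + cmod (of_real (b n0) * psi n0) + cmod (of_real (a n0) * psi (n0 + 1))"
    by (rule order_trans[OF norm_triangle_ineq add_right_mono[OF norm_triangle_ineq]])
  also have "\<dots> = a (n0 - 1) * g (n0 - 1) + \<bar>b n0\<bar> * g n0 + a n0 * g (n0 + 1)"
    unfolding g_def using apos[of "n0 - 1"] apos[of n0] by (simp add: norm_mult)
  also have "\<dots> \<le> Amax * M + Bmax * M + Amax * M"
  proof -
    have gnn: "g n \<ge> 0" for n by (simp add: g_def)
    have "0 \<le> Amax" using a_le[of 0] apos[of 0] by linarith
    moreover have "0 \<le> Bmax" using b_le[of 0] by linarith
    ultimately show ?thesis
      by (intro add_mono mult_mono) (auto simp: a_le b_le gle gnn)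
  qed
  finally have "\<bar>x\<bar> * M \<le> (2 * Amax + Bmax) * M" by (simp add: algebra_simps)
  then show ?thesis using Mpos by simp
qed


lemma L_carrier: "Lmat a b q \<in> carrier_mat q q"
  unfolding Lmat_def by auto

lemma L_entry: "i < q \<Longrightarrow> k < q \<Longrightarrow> Lmat a b q $$ (i,k) =
  (if q = 2 then
         if i = 0 \<and> k = 0 then of_real (b 1)
         else if i = 0 \<and> k = 1 then of_real (a 1) + \<i> * of_real (a 2)
         else if i = 1 \<and> k = 0 then of_real (a 1) - \<i> * of_real (a 2)
         else of_real (b 2)
     else
         if i = k then of_real (b (int i + 1))
         else if k = i + 1 then of_real (a (int i + 1))
         else if i = k + 1 then of_real (a (int k + 1))
         else if i = 0 \<and> k = q - 1 then \<i> * of_real (a (int q))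
         else if i = q - 1 \<and> k = 0 then - \<i> * of_real (a (int q))
         else 0)"
  unfolding Lmat_def by auto

lemma L_herm: "i < q \<Longrightarrow> k < q \<Longrightarrow> cnj (Lmat a b q $$ (i,k)) = Lmat a b q $$ (k,i)"
  unfolding L_entry using q2 by (auto simp: complex_eq_iff)

lemma L_mult: "v \<in> carrier_vec q \<Longrightarrow> i < q \<Longrightarrow> (Lmat a b q *\<^sub>v v) $ i = (\<Sum>k<q. Lmat a b q $$ (i,k) * v $ k)"
  using L_carrier by (auto simp: scalar_prod_def atLeast0LessThan)

end

lemma cancel3: fixes A B C X Y R :: complex
  assumes "A + B + C * X = R" "A + B + C * Y = R" "C \<noteq> 0" shows "X = Y"
proof -
  have "C * X = C * Y" using assms(1,2) by (metis add_left_cancel)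
  then show ?thesis using assms(3) by simp
qed

lemma sum3: fixes f :: "nat \<Rightarrow> 'a::comm_monoid_add"
  assumes "k1 < q" "k2 < q" "k3 < q" "k1 \<noteq> k2" "k1 \<noteq> k3" "k2 \<noteq> k3"
    and "\<And>k. k < q \<Longrightarrow> k \<noteq> k1 \<Longrightarrow> k \<noteq> k2 \<Longrightarrow> k \<noteq> k3 \<Longrightarrow> f k = 0"
  shows "(\<Sum>k<q. f k) = f k1 + f k2 + f k3"
proof -
  have "(\<Sum>k<q. f k) = (\<Sum>k\<in>{k1,k2,k3}. f k)"
    by (rule sum.mono_neutral_right) (use assms in auto)
  also have "\<dots> = f k1 + f k2 + f k3" using assms by (simp add: add.assoc)
  finally show ?thesis .
qed

context jac begin

definition ev :: "complex vec \<Rightarrow> int \<Rightarrow> complex" where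
  "ev v n = (if n = 0 then \<i> * v $ (q - 1) else if n = int q + 1 then - \<i> * v $ 0 else v $ (nat n - 1))"

lemma L_row: assumes v: "v \<in> carrier_vec q" and i: "i < q"
  shows "(Lmat a b q *\<^sub>v v) $ i = of_real (a (int i)) * ev v (int i) + of_real (b (int i + 1)) * ev v (int i + 1)
     + of_real (a (int i + 1)) * ev v (int i + 2)"
proof (cases "q = 2")
  case True
  have a02: "a 0 = a 2" using aper[of 0] True by simp
  have "(\<Sum>k<q. Lmat a b q $$ (i,k) * v $ k) = Lmat a b q $$ (i,0) * v $ 0 + Lmat a b q $$ (i,1) * v $ 1"
    using True by (simp add: numeral_2_eq_2)
  note sum2 = this
  have ent: "Lmat a b q $$ (0,0) = of_real (b 1)" "Lmat a b q $$ (0,1) = of_real (a 1) + \<i> * of_real (a 2)"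
     "Lmat a b q $$ (1,0) = of_real (a 1) - \<i> * of_real (a 2)" "Lmat a b q $$ (1,1) = of_real (b 2)"
    by (subst L_entry; use True in simp)+
  have evs: "ev v 0 = \<i> * v $ 1" "ev v 1 = v $ 0" "ev v 2 = v $ 1" "ev v 3 = - \<i> * v $ 0"
    unfolding ev_def using True by simp_all
  have "i = 0 \<or> i = 1" using i True by auto
  then show ?thesis
  proof
    assume i0: "i = 0"
    have "(Lmat a b q *\<^sub>v v) $ i = Lmat a b q $$ (0,0) * v $ 0 + Lmat a b q $$ (0,1) * v $ 1"
      using sum2 i0 L_mult[OF v i] by simp
    also have "\<dots> = of_real (b 1) * v $ 0 + (of_real (a 1) + \<i> * of_real (a 2)) * v $ 1" by (simp only: ent)
    also have "\<dots> = of_real (a 0) * (\<i> * v $ 1) + of_real (b 1) * v $ 0 + of_real (a 1) * v $ 1"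
      by (simp add: a02 algebra_simps)
    finally show ?thesis using i0 evs by simp
  next
    assume i1: "i = 1"
    have "(Lmat a b q *\<^sub>v v) $ i = Lmat a b q $$ (1,0) * v $ 0 + Lmat a b q $$ (1,1) * v $ 1"
      using sum2 i1 L_mult[OF v i] by simp
    also have "\<dots> = (of_real (a 1) - \<i> * of_real (a 2)) * v $ 0 + of_real (b 2) * v $ 1" by (simp only: ent)
    also have "\<dots> = of_real (a 1) * v $ 0 + of_real (b 2) * v $ 1 + of_real (a 2) * (- \<i> * v $ 0)"
      by (simp add: algebra_simps)
    finally show ?thesis using i1 evs by simp
  qed
next
  case False
  then have q3: "q \<ge> 3" using q2 by simp
  have aq: "a (int q) = a 0" using aper[of 0] by simp
  consider "i = 0" | "i = q - 1" | "0 < i \<and> i < q - 1" using i by linarith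
  then show ?thesis
  proof cases
    case 1
    have z: "Lmat a b q $$ (i,k) * v $ k = 0" if "k < q" "k \<noteq> q - 1" "k \<noteq> 0" "k \<noteq> 1" for k
      by (subst L_entry) (use that 1 q3 in auto)
    have s: "(\<Sum>k<q. Lmat a b q $$ (i,k) * v $ k) = Lmat a b q $$ (i,q-1) * v $ (q-1) + Lmat a b q $$ (i,0) * v $ 0 + Lmat a b q $$ (i,1) * v $ 1"
      by (rule sum3) (use 1 q3 z in auto)
    have ent: "Lmat a b q $$ (i,q-1) = \<i> * of_real (a (int q))" "Lmat a b q $$ (i,0) = of_real (b 1)"
      "Lmat a b q $$ (i,1) = of_real (a 1)"
      by (subst L_entry; use 1 q3 in simp)+
    have evs: "ev v (int i) = \<i> * v $ (q - 1)" "ev v (int i + 1) = v $ 0" "ev v (int i + 2) = v $ 1"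
      unfolding ev_def using 1 q3 by auto
    show ?thesis unfolding L_mult[OF v i] s ent evs using 1 aq by (simp add: algebra_simps)
  next
    case 2
    have z: "Lmat a b q $$ (i,k) * v $ k = 0" if "k < q" "k \<noteq> q - 2" "k \<noteq> q - 1" "k \<noteq> 0" for k
      by (subst L_entry) (use that 2 q3 in auto)
    have s: "(\<Sum>k<q. Lmat a b q $$ (i,k) * v $ k) = Lmat a b q $$ (i,q-2) * v $ (q-2) + Lmat a b q $$ (i,q-1) * v $ (q-1) + Lmat a b q $$ (i,0) * v $ 0"
      by (rule sum3) (use 2 q3 z in auto)
    have i1: "int (q - 2) + 1 = int i" "int i + 1 = int q" using 2 q3 by auto
    have ent: "Lmat a b q $$ (i,q-2) = of_real (a (int (q - 2) + 1))" "Lmat a b q $$ (i,q-1) = of_real (b (int i + 1))"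
      "Lmat a b q $$ (i,0) = - \<i> * of_real (a (int q))"
      by (subst L_entry; use 2 q3 in auto)+
    have evs: "ev v (int i) = v $ (q - 2)" "ev v (int i + 1) = v $ (q - 1)" "ev v (int i + 2) = - \<i> * v $ 0"
    proof -
      have h: "nat (int q - 1) - Suc 0 = q - 2" using q3 by (cases q) auto
      show "ev v (int i) = v $ (q - 2)" "ev v (int i + 1) = v $ (q - 1)" "ev v (int i + 2) = - \<i> * v $ 0"
        unfolding ev_def using 2 q3 h by auto
    qed
    show ?thesis unfolding L_mult[OF v i] s ent evs unfolding i1 by (simp add: algebra_simps)
  next
    case 3
    have z: "Lmat a b q $$ (i,k) * v $ k = 0" if "k < q" "k \<noteq> i - 1" "k \<noteq> i" "k \<noteq> i + 1" for k
      by (subst L_entry) (use that 3 q3 in auto)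
    have s: "(\<Sum>k<q. Lmat a b q $$ (i,k) * v $ k) = Lmat a b q $$ (i,i-1) * v $ (i-1) + Lmat a b q $$ (i,i) * v $ i + Lmat a b q $$ (i,i+1) * v $ (i+1)"
      by (rule sum3) (use 3 q3 z in auto)
    have i1: "int (i - 1) + 1 = int i" using 3 by auto
    have ent: "Lmat a b q $$ (i,i-1) = of_real (a (int i))" "Lmat a b q $$ (i,i) = of_real (b (int i + 1))"
      "Lmat a b q $$ (i,i+1) = of_real (a (int i + 1))"
      by (subst L_entry; use 3 q3 i1 in simp)+
    have evs: "ev v (int i) = v $ (i - 1)" "ev v (int i + 1) = v $ i" "ev v (int i + 2) = v $ (i + 1)"
      unfolding ev_def using 3 q3 by (auto simp: nat_add_distrib)
    show ?thesis unfolding L_mult[OF v i] s ent evs by (simp add: algebra_simps)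
  qed
qed


lemma ev_mid: "k < q \<Longrightarrow> ev v (int k + 1) = v $ k"
proof -
  assume k: "k < q"
  have "nat (int k + 1) = k + 1" by (simp add: nat_add_distrib)
  then show ?thesis unfolding ev_def using k by auto
qed

lemma eig_real: assumes v: "v \<in> carrier_vec q" "v \<noteq> 0\<^sub>v q" and e: "Lmat a b q *\<^sub>v v = mu \<cdot>\<^sub>v v"
  shows "mu \<in> \<real>"
proof -
  let ?L = "Lmat a b q"
  define S where "S = (\<Sum>i<q. cnj (v $ i) * (?L *\<^sub>v v) $ i)"
  define N where "N = (\<Sum>i<q. (cmod (v $ i))^2)"
  have Lv: "(?L *\<^sub>v v) $ i = mu * v $ i" if "i < q" for i
    using e that v(1) by simp
  have "S = (\<Sum>i<q. mu * of_real ((cmod (v $ i))^2))"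
    unfolding S_def
  proof (rule sum.cong)
    fix i assume "i \<in> {..<q}"
    then have "cnj (v $ i) * (?L *\<^sub>v v) $ i = mu * (v $ i * cnj (v $ i))" by (simp add: Lv)
    also have "\<dots> = mu * of_real ((cmod (v $ i))^2)" by (simp only: complex_norm_square)
    finally show "cnj (v $ i) * (?L *\<^sub>v v) $ i = mu * of_real ((cmod (v $ i))^2)" .
  qed simp
  also have "\<dots> = mu * of_real N" unfolding N_def by (simp add: sum_distrib_left)
  finally have SN: "S = mu * of_real N" .
  obtain i where i: "i < q" "v $ i \<noteq> 0"
    using v by (metis carrier_vecD eq_vecI index_zero_vec(1) index_zero_vec(2))
  have "N \<ge> (cmod (v $ i))^2" unfolding N_def by (rule member_le_sum) (use i in auto)
  moreover have "(cmod (v $ i))^2 > 0" using i by simp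
  ultimately have Npos: "N > 0" by linarith
  have S2: "S = (\<Sum>i<q. \<Sum>k<q. cnj (v $ i) * ?L $$ (i,k) * v $ k)"
    unfolding S_def by (rule sum.cong) (auto simp: L_mult[OF v(1)] sum_distrib_left mult.assoc)
  have "cnj S = (\<Sum>i<q. \<Sum>k<q. v $ i * cnj (?L $$ (i,k)) * cnj (v $ k))"
    unfolding S2 by (simp add: cnj_sum)
  also have "\<dots> = (\<Sum>i<q. \<Sum>k<q. v $ i * ?L $$ (k,i) * cnj (v $ k))"
    by (intro sum.cong refl) (simp add: L_herm)
  also have "\<dots> = (\<Sum>k<q. \<Sum>i<q. cnj (v $ k) * ?L $$ (k,i) * v $ i)"
    by (subst sum.swap) (simp add: algebra_simps)
  also have "\<dots> = S" unfolding S2 ..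
  finally have "S \<in> \<real>" using Reals_cnj_iff by blast
  then have "S / of_real N \<in> \<real>" by auto
  moreover have "S / of_real N = mu" using SN Npos by simp
  ultimately show ?thesis by simp
qed

lemma eig_D0: assumes v: "v \<in> carrier_vec q" "v \<noteq> 0\<^sub>v q" and e: "Lmat a b q *\<^sub>v v = mu \<cdot>\<^sub>v v"
  shows "discr a b q mu = 0"
proof -
  define psi where "psi = ext a b mu (ev v 0) (ev v 1)"
  have sol: "jacobi_sol a b mu psi" unfolding psi_def by (rule ext_sol[OF a0])
  have rowk: "of_real (a (int k)) * ev v (int k) + of_real (b (int k + 1)) * ev v (int k + 1)
      + of_real (a (int k + 1)) * ev v (int k + 2) = mu * ev v (int k + 1)" if "k < q" for k
  proof -
    have "(Lmat a b q *\<^sub>v v) $ k = mu * v $ k" using e that v(1) by simp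
    then show ?thesis using L_row[OF v(1) that] ev_mid[OF that] by simp
  qed
  have agree: "k \<le> q \<Longrightarrow> psi (int k) = ev v (int k) \<and> psi (int k + 1) = ev v (int k + 1)" for k
  proof (induction k)
    case 0 then show ?case by (simp add: psi_def)
  next
    case (Suc k)
    then have kq: "k < q" by simp
    with Suc.IH have ih: "psi (int k) = ev v (int k)" "psi (int k + 1) = ev v (int k + 1)" by auto
    have kk: "int k + 1 - 1 = int k" "int k + 1 + 1 = int k + 2" by simp_all
    have r: "of_real (a (int k)) * psi (int k) + of_real (b (int k + 1)) * psi (int k + 1)
      + of_real (a (int k + 1)) * psi (int k + 2) = mu * psi (int k + 1)"
      using sol[unfolded jacobi_sol_def, rule_format, of "int k + 1"] unfolding kk .
    have r': "of_real (a (int k)) * ev v (int k) + of_real (b (int k + 1)) * ev v (int k + 1)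
      + of_real (a (int k + 1)) * psi (int k + 2) = mu * ev v (int k + 1)"
      using r unfolding ih .
    have "psi (int k + 2) = ev v (int k + 2)"
      by (rule cancel3[OF r' rowk[OF kq]]) (simp add: a0)
    moreover have "int (Suc k) = int k + 1" "int k + 1 + 1 = int k + 2" by simp_all
    ultimately show ?case using ih by (simp only: simp_thms)
  qed
  have pq: "psi (int q) = - \<i> * psi 0"
  proof -
    have "psi (int q) = ev v (int q)" using agree[of q] by simp
    also have "\<dots> = v $ (q - 1)" unfolding ev_def using qpos by auto
    finally show ?thesis by (simp add: psi_def ev_def)
  qed
  have pq1: "psi (int q + 1) = - \<i> * psi 1"
  proof -
    have "psi (int q + 1) = ev v (int q + 1)" using agree[of q] by simp
    also have "\<dots> = - \<i> * v $ 0" unfolding ev_def by auto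
    finally show ?thesis using q2 by (simp add: psi_def ev_def)
  qed
  have sh: "jacobi_sol a b mu (\<lambda>n. psi (n + int q))" by (rule sol_shift[OF aper bper sol])
  have rs: "jacobi_sol a b mu (\<lambda>n. (- \<i>) * psi n)" using sol_lin[OF sol sol, of "- \<i>" 0] by simp
  have eqf: "(\<lambda>n. psi (n + int q)) = (\<lambda>n. (- \<i>) * psi n)"
    by (rule sol_unique[OF a0 sh rs]) (use pq pq1 in \<open>simp_all add: add.commute\<close>)
  have nz: "psi 0 \<noteq> 0 \<or> psi 1 \<noteq> 0"
  proof (rule ccontr)
    assume "\<not> (psi 0 \<noteq> 0 \<or> psi 1 \<noteq> 0)"
    then have z: "psi 0 = 0" "psi 1 = 0" by auto
    have zs: "jacobi_sol a b mu (\<lambda>_. 0)" unfolding jacobi_sol_def by simp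
    have "psi = (\<lambda>_. 0)" by (rule sol_unique[OF a0 sol zs]) (use z in auto)
    then have "v $ k = 0" if "k < q" for k
      using agree[of k] that ev_mid[OF that] by auto
    then have "v = 0\<^sub>v q" using v(1) by (intro eq_vecI) auto
    then show False using v(2) by simp
  qed
  have "(- \<i>)^2 - discr a b q mu * (- \<i>) + 1 = 0"
    by (rule floquet_char[OF sol _ nz]) (use fun_cong[OF eqf] in auto)
  then have "\<i> * discr a b q mu = 0" by (simp add: power2_eq_square algebra_simps)
  then show ?thesis by simp
qed


lemma eig_bound: assumes ev: "eigenvalue (Lmat a b q) mu" and nm: "normalised a b q"
  shows "cmod mu < jac_c a b q"
proof -
  let ?S = "jac_spectrum a b q"
  obtain v where "eigenvector (Lmat a b q) v mu" using ev unfolding eigenvalue_def by blast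
  then have v: "v \<in> carrier_vec q" "v \<noteq> 0\<^sub>v q" and e: "Lmat a b q *\<^sub>v v = mu \<cdot>\<^sub>v v"
    unfolding eigenvector_def using L_carrier by auto
  from eig_real[OF v e] obtain t where t: "mu = of_real t" by (auto elim: Reals_cases)
  have D0: "discr a b q (of_real t) = 0" using eig_D0[OF v e] t by simp
  have bnd: "\<bar>x\<bar> \<le> 2 * Amax + Bmax" if "x \<in> ?S" for x
    using spec_bound that unfolding jac_spectrum_def by auto
  have ba: "bdd_above ?S" unfolding bdd_above_def using bnd by (intro exI[of _ "2 * Amax + Bmax"]) (auto simp: abs_le_iff)
  have bl: "- (2 * Amax + Bmax) \<le> x" if "x \<in> ?S" for x using bnd[OF that] by linarith
  have bb: "bdd_below ?S" by (rule bdd_belowI[OF bl])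
  have "(\<lambda>x::real. discr a b q (of_real x)) \<midarrow>t\<rightarrow> discr a b q (of_real t)"
    using discr_cont[OF a0, where b=b and q=q and y=t] unfolding isCont_def .
  from LIM_D[OF this, of 2] obtain d where d: "d > 0"
    and dd: "\<forall>x. x \<noteq> t \<and> norm (x - t) < d \<longrightarrow> norm (discr a b q (of_real x) - discr a b q (of_real t)) < 2"
    by auto
  have "t + d/2 \<in> ?S" using spec[OF dd, of "t + d/2"] d D0 unfolding jac_spectrum_def by auto
  then have up: "t + d/2 \<le> Sup ?S" using ba by (rule cSup_upper)
  have "t - d/2 \<in> ?S" using spec[OF dd, of "t - d/2"] d D0 unfolding jac_spectrum_def by auto
  then have lo: "Inf ?S \<le> t - d/2" using bb by (rule cInf_lower)
  have "Inf ?S = - Sup ?S" using nm unfolding normalised_def lam_min_def lam_max_def .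
  moreover have "jac_c a b q = (Sup ?S - Inf ?S) / 2" unfolding jac_c_def lam_min_def lam_max_def ..
  ultimately have c: "jac_c a b q = Sup ?S" by simp
  show ?thesis unfolding t c using up lo d \<open>Inf ?S = - Sup ?S\<close> by simp
qed

end


lemma mtrace_comm: assumes A: "A \<in> carrier_mat n m" and B: "B \<in> carrier_mat m n"
  shows "mtrace (A * B) = mtrace (B * A)"
proof -
  have "mtrace (A * B) = (\<Sum>i<n. \<Sum>k<m. A $$ (i,k) * B $$ (k,i))"
    unfolding mtrace_def using A B by (intro sum.cong) (auto simp: scalar_prod_def atLeast0LessThan)
  also have "\<dots> = (\<Sum>k<m. \<Sum>i<n. B $$ (k,i) * A $$ (i,k))" by (subst sum.swap) (simp add: mult.commute)
  also have "\<dots> = mtrace (B * A)"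
    unfolding mtrace_def using A B by (intro sum.cong) (auto simp: scalar_prod_def atLeast0LessThan)
  finally show ?thesis .
qed

lemma sum_single: fixes f :: "nat \<Rightarrow> 'a::comm_monoid_add"
  assumes "i < n" "\<And>l. l < n \<Longrightarrow> l \<noteq> i \<Longrightarrow> f l = 0"
  shows "(\<Sum>l<n. f l) = f i"
proof -
  have "(\<Sum>l<n. f l) = (\<Sum>l\<in>{i}. f l)" by (rule sum.mono_neutral_right) (use assms in auto)
  then show ?thesis by simp
qed

lemma ut_pow: fixes B :: "'a::comm_ring_1 mat"
  assumes B: "B \<in> carrier_mat n n" and ut: "upper_triangular B"
  shows "upper_triangular (B ^\<^sub>m k) \<and> (\<forall>i<n. (B ^\<^sub>m k) $$ (i,i) = B $$ (i,i) ^ k)"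
proof (induction k)
  case 0 then show ?case using B by auto
next
  case (Suc k)
  let ?C = "B ^\<^sub>m k"
  have C: "?C \<in> carrier_mat n n" using B by simp
  have Cz: "?C $$ (i,l) = 0" if "i < n" "l < i" for i l using Suc.IH C that unfolding upper_triangular_def by auto
  have Bz: "B $$ (i,l) = 0" if "i < n" "l < i" for i l using ut B that unfolding upper_triangular_def by auto
  have ent: "(?C * B) $$ (i,j) = (\<Sum>l<n. ?C $$ (i,l) * B $$ (l,j))" if "i < n" "j < n" for i j
    using C B that by (auto simp: scalar_prod_def atLeast0LessThan)
  have "upper_triangular (?C * B)"
    unfolding upper_triangular_def
  proof (intro allI impI)
    fix i j assume i: "i < dim_row (?C * B)" and j: "j < i"
    then have i': "i < n" using C B by simp
    have "(\<Sum>l<n. ?C $$ (i,l) * B $$ (l,j)) = 0"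
    proof (rule sum.neutral, intro ballI)
      fix l assume "l \<in> {..<n}"
      then show "?C $$ (i,l) * B $$ (l,j) = 0"
        using Cz[OF i', of l] Bz[of l j] j by (cases "l < i") auto
    qed
    then show "(?C * B) $$ (i,j) = 0" using ent[OF i'] j i' by simp
  qed
  moreover have "(?C * B) $$ (i,i) = B $$ (i,i) ^ Suc k" if i: "i < n" for i
  proof -
    have "(\<Sum>l<n. ?C $$ (i,l) * B $$ (l,i)) = ?C $$ (i,i) * B $$ (i,i)"
    proof (rule sum_single[OF i])
      fix l assume "l < n" "l \<noteq> i"
      then show "?C $$ (i,l) * B $$ (l,i) = 0" using Cz[OF i, of l] Bz[of l i] by (cases "l < i") auto
    qed
    then show ?thesis using ent[OF i i] Suc.IH i by simp
  qed
  ultimately show ?case by simp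
qed

theorem mainTheorem11:
  fixes a b :: "int \<Rightarrow> real" and q :: nat
  assumes "q \<ge> 2"
    and "\<And>n. a n > 0"
    and "\<And>n. a (n + int q) = a n"
    and "\<And>n. b (n + int q) = b n"
    and "normalised a b q"
  shows "\<forall>j::nat. j \<ge> 1 \<longrightarrow>
           jac_c a b q ^ (2 * j) > Re (mtrace (Lmat a b q ^\<^sub>m (2 * j))) / real q"
proof (intro allI impI)
  interpret jac a b q using assms(1-4) by unfold_locales
  fix j :: nat assume j: "j \<ge> 1"
  define m where "m = 2 * j"
  have m: "m > 0" using j unfolding m_def by simp
  let ?L = "Lmat a b q"
  let ?c = "jac_c a b q"
  have L: "?L \<in> carrier_mat q q" by (rule L_carrier)
  obtain es where cp: "char_poly ?L = (\<Prod>e\<leftarrow>es. [:- e, 1:])" using char_poly_factorized[OF L] by blast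
  obtain B P Q where sd: "schur_decomposition ?L es = (B, P, Q)" by (cases "schur_decomposition ?L es") auto
  from schur_decomposition[OF L cp sd] have sw: "similar_mat_wit ?L B P Q" and ut: "upper_triangular B"
    and dg: "diag_mat B = es" by auto
  note W = similar_mat_witD2[OF L sw]
  have Bc: "B \<in> carrier_mat q q" and Pc: "P \<in> carrier_mat q q" and Qc: "Q \<in> carrier_mat q q"
    and QP: "Q * P = 1\<^sub>m q" using W by auto
  have Lm: "?L ^\<^sub>m m = P * B ^\<^sub>m m * Q" by (rule similar_mat_wit_pow_id[OF sw])
  have Bm: "B ^\<^sub>m m \<in> carrier_mat q q" using Bc by simp
  have "mtrace (?L ^\<^sub>m m) = mtrace (Q * (P * B ^\<^sub>m m))"
    unfolding Lm by (rule mtrace_comm[of _ q q]) (use Pc Bm Qc in auto)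
  also have "Q * (P * B ^\<^sub>m m) = (Q * P) * B ^\<^sub>m m" using Pc Bm Qc by (simp add: assoc_mult_mat)
  also have "\<dots> = B ^\<^sub>m m" unfolding QP by (rule left_mult_one_mat[OF Bm])
  finally have "mtrace (?L ^\<^sub>m m) = mtrace (B ^\<^sub>m m)" .
  also have "\<dots> = (\<Sum>i<q. B $$ (i,i) ^ m)"
    unfolding mtrace_def using Bc ut_pow[OF Bc ut, of m] by (intro sum.cong) auto
  finally have tr: "mtrace (?L ^\<^sub>m m) = (\<Sum>i<q. B $$ (i,i) ^ m)" .
  have evs: "cmod (B $$ (i,i)) < ?c" if i: "i < q" for i
  proof -
    have "B $$ (i,i) = es ! i" using dg[symmetric] i Bc by (simp add: diag_mat_def)
    moreover have "i < length es" using dg[symmetric] i Bc by (simp add: diag_mat_def)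
    ultimately have inset: "B $$ (i,i) \<in> set es" by simp
    have "poly (char_poly ?L) (B $$ (i,i)) = 0"
      unfolding cp poly_prod_list prod_list_zero_iff using inset by force
    then have "eigenvalue ?L (B $$ (i,i))" using eigenvalue_root_char_poly[OF L] by simp
    then show ?thesis by (rule eig_bound[OF _ assms(5)])
  qed
  have lt: "Re (B $$ (i,i) ^ m) < ?c ^ m" if i: "i < q" for i
  proof -
    have "Re (B $$ (i,i) ^ m) \<le> cmod (B $$ (i,i) ^ m)" by (rule complex_Re_le_cmod)
    also have "\<dots> = cmod (B $$ (i,i)) ^ m" by (simp add: norm_power)
    also have "\<dots> < ?c ^ m" by (rule power_strict_mono[OF evs[OF i]]) (use m in auto)
    finally show ?thesis .
  qed
  have "Re (mtrace (?L ^\<^sub>m m)) = (\<Sum>i<q. Re (B $$ (i,i) ^ m))" unfolding tr by (simp add: Re_sum)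
  also have "\<dots> < (\<Sum>i<q. ?c ^ m)" by (rule sum_strict_mono) (use lt qpos in auto)
  also have "\<dots> = real q * ?c ^ m" by simp
  finally have "Re (mtrace (?L ^\<^sub>m m)) / real q < ?c ^ m" using qpos by (simp add: divide_less_eq mult.commute)
  then show "?c ^ (2 * j) > Re (mtrace (?L ^\<^sub>m (2 * j))) / real q" unfolding m_def .
qed

end
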